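(* Let $\mathcal{F}=\mathcal{F}(X)$ be the free group on an alphabet $X$, equipped with a bi-order $\prec$, and let $W\in\mathcal{F}$ be a cyclically reduced nonperiodic word. Then the maximal ascent of $W$ is uniquely positioned in $W$.
   Context: Words are over $X^*=X\cup X^{-1}$; a word $y_1\cdots y_n$ is reduced if $y_i\neq y_{i+1}^{-1}$ for all $i$, and cyclically reduced if moreover $y_1\neq y_n^{-1}$. Words are identified with the elements of $\mathcal{F}$ they represent; $1_\mathcal{F}$ is the empty word. A bi-order on $\mathcal{F}$ is a total order invariant under both left and right multiplication. $W$ is periodic if $W=U^k$ for some cyclically reduced word $U$ and some $k>1$; nonperiodic otherwise. A subword of $W$ is a word $V$ with $W=SVU$ and $|W|=|S|+|V|+|U|$; it is a prefix if $S$ is empty and a suffix if $U$ is empty. If $W=UV$ with $U$ a prefix, then $VU$ is a cyclic permutation of $W$. $R_W$ denotes the set of cyclic permutations of $W$ and of $W^{-1}$. A nontrivial reduced word $U$ is uniquely positioned in $W$ if $U$ is a prefix of exactly one element of $R_W$. A word $U$ is an ascent if every (nonempty) prefix and every (nonempty) suffix of $U$ (including $U$ itself) is $\succ 1_\mathcal{F}$. The maximal ascent of $W$ is the greatest (with respect to $\prec$) ascent among all subwords of elements of $R_W$. *)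

theory Defs
  imports Main "HOL-Library.Sublist"
begin

text \<open>Letters of the alphabet X* = X \<union> X^-1 over an alphabet type 'a:
  (x, False) is the generator x, (x, True) is its inverse.
  Elements of the free group F(X) are identified with reduced words.\<close>

type_synonym 'a letter = "'a \<times> bool"
type_synonym 'a word = "'a letter list"

definition inv_letter :: "'a letter \<Rightarrow> 'a letter" where
  "inv_letter l = (fst l, \<not> snd l)"

definition word_inv :: "'a word \<Rightarrow> 'a word" where
  "word_inv w = rev (map inv_letter w)"

definition reduced :: "'a word \<Rightarrow> bool" where
  "reduced w \<longleftrightarrow> (\<forall>i. Suc i < length w \<longrightarrow> w ! Suc i \<noteq> inv_letter (w ! i))"

definition cyclically_reduced :: "'a word \<Rightarrow> bool" where
  "cyclically_reduced w \<longleftrightarrow> reduced w \<and> (w \<noteq> [] \<longrightarrow> hd w \<noteq> inv_letter (last w))"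

fun red :: "'a word \<Rightarrow> 'a word" where
  "red [] = []"
| "red (x # w) = (case red w of [] \<Rightarrow> [x]
                   | y # v \<Rightarrow> (if y = inv_letter x then v else x # y # v))"

definition fmult :: "'a word \<Rightarrow> 'a word \<Rightarrow> 'a word" where
  "fmult u v = red (u @ v)"

text \<open>A bi-order on F(X), given by its strict part: a strict total order on the
  reduced words invariant under left and right multiplication.\<close>
definition bi_order :: "('a word \<Rightarrow> 'a word \<Rightarrow> bool) \<Rightarrow> bool" where
  "bi_order lt \<longleftrightarrow>
     (\<forall>a. reduced a \<longrightarrow> \<not> lt a a) \<and>
     (\<forall>a b c. reduced a \<longrightarrow> reduced b \<longrightarrow> reduced c \<longrightarrow> lt a b \<longrightarrow> lt b c \<longrightarrow> lt a c) \<and>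
     (\<forall>a b. reduced a \<longrightarrow> reduced b \<longrightarrow> a = b \<or> lt a b \<or> lt b a) \<and>
     (\<forall>a b c. reduced a \<longrightarrow> reduced b \<longrightarrow> reduced c \<longrightarrow> lt a b \<longrightarrow>
        lt (fmult c a) (fmult c b) \<and> lt (fmult a c) (fmult b c))"

definition periodic :: "'a word \<Rightarrow> bool" where
  "periodic W \<longleftrightarrow> (\<exists>U k. cyclically_reduced U \<and> k > 1 \<and> W = concat (replicate k U))"

definition cyc_perms :: "'a word \<Rightarrow> 'a word set" where
  "cyc_perms W = {V @ U | U V. W = U @ V}"

definition R_set :: "'a word \<Rightarrow> 'a word set" where
  "R_set W = cyc_perms W \<union> cyc_perms (word_inv W)"

definition subword :: "'a word \<Rightarrow> 'a word \<Rightarrow> bool" where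
  "subword V W \<longleftrightarrow> (\<exists>S U. W = S @ V @ U)"

definition uniquely_positioned :: "'a word \<Rightarrow> 'a word \<Rightarrow> bool" where
  "uniquely_positioned U W \<longleftrightarrow> U \<noteq> [] \<and> reduced U \<and>
     (\<exists>!V. V \<in> R_set W \<and> prefix U V)"

definition ascent :: "('a word \<Rightarrow> 'a word \<Rightarrow> bool) \<Rightarrow> 'a word \<Rightarrow> bool" where
  "ascent lt U \<longleftrightarrow>
     (\<forall>P. P \<noteq> [] \<longrightarrow> prefix P U \<longrightarrow> lt [] P) \<and>
     (\<forall>S. S \<noteq> [] \<longrightarrow> suffix S U \<longrightarrow> lt [] S)"

definition is_max_ascent :: "('a word \<Rightarrow> 'a word \<Rightarrow> bool) \<Rightarrow> 'a word \<Rightarrow> 'a word \<Rightarrow> bool" where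
  "is_max_ascent lt W M \<longleftrightarrow>
     (\<exists>V\<in>R_set W. subword M V) \<and> ascent lt M \<and>
     (\<forall>A. (\<exists>V\<in>R_set W. subword A V) \<longrightarrow> ascent lt A \<longrightarrow> A = M \<or> lt A M)"

end

theory Submission
  imports Defs
begin

lemma inv_inv[simp]: "inv_letter (inv_letter x) = x"
  by (simp add: inv_letter_def)

lemma inv_neq[simp]: "inv_letter x \<noteq> x"
  by (cases x) (simp add: inv_letter_def)

lemma inv_eq_iff[simp]: "(inv_letter x = inv_letter y) = (x = y)"
  by (metis inv_inv)

lemma word_inv_Nil[simp]: "word_inv [] = []"
  by (simp add: word_inv_def)

lemma word_inv_Cons[simp]: "word_inv (x # w) = word_inv w @ [inv_letter x]"
  by (simp add: word_inv_def)

lemma word_inv_append[simp]: "word_inv (u @ v) = word_inv v @ word_inv u"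
  by (simp add: word_inv_def)

lemma word_inv_inv[simp]: "word_inv (word_inv w) = w"
  by (simp add: word_inv_def rev_map comp_def)

lemma length_word_inv[simp]: "length (word_inv w) = length w"
  by (simp add: word_inv_def)

lemma word_inv_eq_Nil[simp]: "(word_inv w = []) = (w = [])"
  by (simp add: word_inv_def)

lemma word_inv_eq_iff[simp]: "(word_inv u = word_inv v) = (u = v)"
  by (metis word_inv_inv)

lemma reduced_Nil[simp]: "reduced []"
  by (simp add: reduced_def)

lemma reduced_Cons_iff: "reduced (x # w) = (reduced w \<and> (w \<noteq> [] \<longrightarrow> hd w \<noteq> inv_letter x))"
proof
  assume r: "reduced (x # w)"
  have "reduced w" unfolding reduced_def
  proof (intro allI impI)
    fix i assume "Suc i < length w"
    with r show "w ! Suc i \<noteq> inv_letter (w ! i)"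
      unfolding reduced_def by (metis Suc_less_eq length_Cons nth_Cons_Suc)
  qed
  moreover have "w \<noteq> [] \<longrightarrow> hd w \<noteq> inv_letter x"
    using r unfolding reduced_def by (cases w) force+
  ultimately show "reduced w \<and> (w \<noteq> [] \<longrightarrow> hd w \<noteq> inv_letter x)" by blast
next
  assume a: "reduced w \<and> (w \<noteq> [] \<longrightarrow> hd w \<noteq> inv_letter x)"
  show "reduced (x # w)" unfolding reduced_def
  proof (intro allI impI)
    fix i assume i: "Suc i < length (x # w)"
    show "(x # w) ! Suc i \<noteq> inv_letter ((x # w) ! i)"
    proof (cases i)
      case 0
      with i a show ?thesis by (cases w) auto
    next
      case (Suc j)
      with i a show ?thesis unfolding reduced_def by auto
    qed
  qed
qed

lemma reduced_single[simp]: "reduced [x]"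
  by (simp add: reduced_Cons_iff)

lemma reduced_append: "reduced (u @ v) = (reduced u \<and> reduced v \<and> (u \<noteq> [] \<longrightarrow> v \<noteq> [] \<longrightarrow> hd v \<noteq> inv_letter (last u)))"
proof (induction u)
  case Nil
  then show ?case by simp
next
  case (Cons x u)
  show ?case
  proof (cases u)
    case Nil
    then show ?thesis by (simp add: reduced_Cons_iff)
  next
    case (Cons y u')
    then show ?thesis using Cons.IH by (auto simp: reduced_Cons_iff)
  qed
qed

lemma reduced_take: "reduced w \<Longrightarrow> reduced (take k w)"
  by (metis append_take_drop_id reduced_append)

lemma reduced_drop: "reduced w \<Longrightarrow> reduced (drop k w)"
  by (metis append_take_drop_id reduced_append)

lemma reduced_mid: "reduced (s @ a @ u) \<Longrightarrow> reduced a"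
  by (simp add: reduced_append)

lemma last_word_inv: "w \<noteq> [] \<Longrightarrow> last (word_inv w) = inv_letter (hd w)"
  by (cases w) auto

lemma hd_word_inv: "w \<noteq> [] \<Longrightarrow> hd (word_inv w) = inv_letter (last w)"
  by (induction w) (auto simp: hd_append)

lemma reduced_word_inv: "reduced w \<Longrightarrow> reduced (word_inv w)"
proof (induction w)
  case Nil
  then show ?case by simp
next
  case (Cons x w)
  then have rw: "reduced w" and h: "w \<noteq> [] \<longrightarrow> hd w \<noteq> inv_letter x" by (auto simp: reduced_Cons_iff)
  show ?case using Cons.IH[OF rw] h
    by (auto simp: reduced_append last_word_inv)
qed

lemma cyc_red_iff: "cyclically_reduced w = reduced (w @ w)"
  unfolding cyclically_reduced_def reduced_append by auto

lemma red_reduced: "reduced (red w)"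
proof (induction w)
  case Nil
  then show ?case by simp
next
  case (Cons x w)
  then show ?case
    by (auto simp: reduced_Cons_iff split: list.split)
qed

lemma red_id: "reduced w \<Longrightarrow> red w = w"
proof (induction w)
  case Nil
  then show ?case by simp
next
  case (Cons x w)
  then have "red w = w" by (simp add: reduced_Cons_iff)
  with Cons.prems show ?case by (cases w) (auto simp: reduced_Cons_iff)
qed

lemma red_red[simp]: "red (red w) = red w"
  by (simp add: red_id red_reduced)

lemma red_Cons_red: "red (x # w) = red (x # red w)"
  by simp

lemma red_cancel: "red (x # inv_letter x # w) = red w"
proof -
  have r: "reduced (red w)" by (rule red_reduced)
  show ?thesis
  proof (cases "red w")
    case Nil
    then show ?thesis by simp
  next
    case (Cons y v)
    show ?thesis
    proof (cases "y = x")
      case True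
      show ?thesis
      proof (cases v)
        case Nil
        with Cons True show ?thesis by simp
      next
        case (Cons z v')
        with \<open>red w = y # v\<close> True r have "z \<noteq> inv_letter x" by (simp add: reduced_Cons_iff)
        with Cons \<open>red w = y # v\<close> True show ?thesis by simp
      qed
    next
      case False
      with Cons show ?thesis by auto
    qed
  qed
qed

lemma red_cancel': "red (inv_letter x # x # w) = red w"
  using red_cancel[of "inv_letter x" w] by simp

lemma red_append_red: "red (u @ w) = red (u @ red w)"
  by (induction u) auto

lemma red_red_append: "red (u @ w) = red (red u @ w)"
proof (induction u)
  case Nil
  then show ?case by (simp add: red_append_red[of "[]"])
next
  case (Cons x u)
  have IH: "red (u @ w) = red (red u @ w)" by (rule Cons.IH)
  define r where "r = red u"
  have rr: "reduced r" unfolding r_def by (rule red_reduced)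
  have "red ((x # u) @ w) = red (x # red (u @ w))"
    by (simp add: red_append_red[of "[x]" "u @ w", simplified])
  also have "\<dots> = red (x # red (r @ w))" using IH r_def by simp
  also have "\<dots> = red (red (x # r) @ w)"
  proof (cases r)
    case Nil
    then show ?thesis by (simp add: red_append_red[of "[x]", simplified])
  next
    case (Cons y v)
    show ?thesis
    proof (cases "y = inv_letter x")
      case True
      have rv: "reduced v" using rr Cons by (simp add: reduced_Cons_iff)
      have "red (x # red (r @ w)) = red (x # r @ w)" by (rule red_Cons_red[symmetric])
      also have "\<dots> = red (v @ w)" using Cons True red_cancel[of x "v @ w"] by simp
      finally have 1: "red (x # red (r @ w)) = red (v @ w)" .
      have "red (x # r) = red v" using Cons True red_cancel[of x v] by simp
      also have "\<dots> = v" using rv by (rule red_id)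
      finally show ?thesis using 1 by simp
    next
      case False
      have "reduced (x # r)" using Cons False rr by (simp add: reduced_Cons_iff)
      hence "red (x # r) = x # r" by (rule red_id)
      hence "red (red (x # r) @ w) = red (x # r @ w)" by simp
      then show ?thesis using red_Cons_red[of x "r @ w"] by simp
    qed
  qed
  finally show ?case by (simp add: r_def)
qed

lemma red_inv_cancel: "red (word_inv X @ X @ w) = red w"
proof (induction X arbitrary: w rule: rev_induct)
  case Nil
  then show ?case by simp
next
  case (snoc a X)
  have "word_inv (X @ [a]) @ (X @ [a]) @ w = inv_letter a # (word_inv X @ X @ (a # w))"
    by simp
  hence "red (word_inv (X @ [a]) @ (X @ [a]) @ w) = red (inv_letter a # red (word_inv X @ X @ (a # w)))"
    using red_append_red[of "[inv_letter a]"] by simp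
  also have "\<dots> = red (inv_letter a # red (a # w))" using snoc by simp
  also have "\<dots> = red (inv_letter a # a # w)" by (rule red_Cons_red[symmetric])
  also have "\<dots> = red w" by (rule red_cancel')
  finally show ?case .
qed

lemma red_inv_cancel2: "red (X @ word_inv X @ w) = red w"
  using red_inv_cancel[of "word_inv X" w] by simp

lemma fmult_red: "fmult (red a) (red b) = red (a @ b)"
  unfolding fmult_def by (metis red_append_red red_red_append)

lemma fmult_Nil_left: "reduced b \<Longrightarrow> fmult [] b = b"
  by (simp add: fmult_def red_id)

lemma fmult_Nil_right: "reduced b \<Longrightarrow> fmult b [] = b"
  by (simp add: fmult_def red_id)

lemma fmult_reduced: "reduced (fmult a b)"
  by (simp add: fmult_def red_reduced)

context
  fixes lt :: "'a word \<Rightarrow> 'a word \<Rightarrow> bool"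
  assumes bo: "bi_order lt"
begin

lemma lt_irrefl: "reduced a \<Longrightarrow> \<not> lt a a"
  using bo unfolding bi_order_def by blast

lemma lt_trans: "reduced a \<Longrightarrow> reduced b \<Longrightarrow> reduced c \<Longrightarrow> lt a b \<Longrightarrow> lt b c \<Longrightarrow> lt a c"
  using bo unfolding bi_order_def by blast

lemma lt_total: "reduced a \<Longrightarrow> reduced b \<Longrightarrow> a = b \<or> lt a b \<or> lt b a"
  using bo unfolding bi_order_def by blast

lemma lt_asym: "reduced a \<Longrightarrow> reduced b \<Longrightarrow> lt a b \<Longrightarrow> \<not> lt b a"
  using lt_irrefl lt_trans by blast

lemma lt_left: "reduced a \<Longrightarrow> reduced b \<Longrightarrow> reduced c \<Longrightarrow> lt a b \<Longrightarrow> lt (fmult c a) (fmult c b)"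
  using bo unfolding bi_order_def by blast

lemma lt_right: "reduced a \<Longrightarrow> reduced b \<Longrightarrow> reduced c \<Longrightarrow> lt a b \<Longrightarrow> lt (fmult a c) (fmult b c)"
  using bo unfolding bi_order_def by blast

lemma fmult_inv_self: "fmult (word_inv x) x = []"
  unfolding fmult_def using red_inv_cancel[of x "[]"] by simp

lemma pos_of_lt: "reduced x \<Longrightarrow> reduced y \<Longrightarrow> lt x y \<Longrightarrow> lt [] (fmult (word_inv x) y)"
  using lt_left[of x y "word_inv x"] by (simp add: reduced_word_inv fmult_inv_self)

lemma neg_of_lt: "reduced x \<Longrightarrow> reduced y \<Longrightarrow> lt y x \<Longrightarrow> lt (fmult (word_inv x) y) []"
  using lt_left[of y x "word_inv x"] by (simp add: reduced_word_inv fmult_inv_self)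

lemma mono2:
  assumes r: "reduced x" "reduced x'" "reduced y" "reduced y'"
    and hx: "x = x' \<or> lt x x'" and hy: "y = y' \<or> lt y' y" and ne: "\<not> (x = x' \<and> y = y')"
  shows "lt (fmult (word_inv x') y') (fmult (word_inv x) y)"
proof -
  define c where "c = fmult (word_inv x') y"
  have rc: "reduced c" by (simp add: c_def fmult_reduced)
  have h1: "y = y' \<or> lt (fmult (word_inv x') y') c"
    using hy lt_left[of y' y "word_inv x'"] r by (auto simp: c_def reduced_word_inv)
  have h2: "x = x' \<or> lt c (fmult (word_inv x) y)"
  proof (cases "x = x'")
    case False
    with hx have "lt x x'" by simp
    hence "lt [] (fmult (word_inv x) x')" using pos_of_lt r by blast
    hence "lt (fmult [] c) (fmult (fmult (word_inv x) x') c)"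
      using lt_right[of "[]" _ c] rc by (simp add: fmult_reduced)
    moreover have "fmult [] c = c" using rc by (simp add: fmult_Nil_left)
    moreover have "fmult (fmult (word_inv x) x') c = fmult (word_inv x) y"
    proof -
      have "fmult (fmult (word_inv x) x') c = red ((word_inv x @ x') @ (word_inv x' @ y))"
        unfolding c_def fmult_def by (rule fmult_red[unfolded fmult_def])
      also have "\<dots> = red (word_inv x @ (x' @ word_inv x' @ y))" by simp
      also have "\<dots> = red (word_inv x @ red (x' @ word_inv x' @ y))" by (rule red_append_red)
      also have "\<dots> = red (word_inv x @ red y)" by (simp add: red_inv_cancel2)
      also have "\<dots> = red (word_inv x @ y)" by (rule red_append_red[symmetric])
      finally show ?thesis by (simp add: fmult_def)
    qed
    ultimately show ?thesis by simp
  qed simp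
  have r3: "reduced (fmult (word_inv x') y')" "reduced (fmult (word_inv x) y)" by (simp_all add: fmult_reduced)
  show ?thesis
  proof (cases "x = x'")
    case True
    with ne have "y \<noteq> y'" by simp
    with h1 True show ?thesis by (simp add: c_def)
  next
    case False
    with h2 have 2: "lt c (fmult (word_inv x) y)" by simp
    show ?thesis
    proof (cases "y = y'")
      case True
      with 2 show ?thesis by (simp add: c_def)
    next
      case False
      with h1 have "lt (fmult (word_inv x') y') c" by simp
      with 2 show ?thesis using lt_trans r3 rc by blast
    qed
  qed
qed

end

lemma exists_least:
  fixes n :: nat and f :: "nat \<Rightarrow> 'b"
  assumes trans: "\<And>x y z. x \<in> S \<Longrightarrow> y \<in> S \<Longrightarrow> z \<in> S \<Longrightarrow> R x y \<Longrightarrow> R y z \<Longrightarrow> R x z"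
    and total: "\<And>x y. x \<in> S \<Longrightarrow> y \<in> S \<Longrightarrow> x \<noteq> y \<Longrightarrow> R x y \<or> R y x"
    and inS: "\<And>s. s \<le> n \<Longrightarrow> f s \<in> S"
    and inj: "\<And>s t. s \<le> n \<Longrightarrow> t \<le> n \<Longrightarrow> s \<noteq> t \<Longrightarrow> f s \<noteq> f t"
  shows "\<exists>a\<le>n. \<forall>s\<le>n. s \<noteq> a \<longrightarrow> R (f a) (f s)"
  using inS inj
proof (induction n)
  case 0
  then show ?case by auto
next
  case (Suc n)
  then obtain a where a: "a \<le> n" "\<forall>s\<le>n. s \<noteq> a \<longrightarrow> R (f a) (f s)" by fastforce
  have ne: "f a \<noteq> f (Suc n)" using Suc.prems a by simp
  from total[OF Suc.prems(1) Suc.prems(1) ne] a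
  have "R (f a) (f (Suc n)) \<or> R (f (Suc n)) (f a)" using Suc.prems by simp
  then show ?case
  proof
    assume "R (f a) (f (Suc n))"
    then show ?thesis using a by (metis le_Suc_eq le_SucI)
  next
    assume h: "R (f (Suc n)) (f a)"
    have "\<forall>s\<le>Suc n. s \<noteq> Suc n \<longrightarrow> R (f (Suc n)) (f s)"
    proof (intro allI impI)
      fix s assume s: "s \<le> Suc n" "s \<noteq> Suc n"
      show "R (f (Suc n)) (f s)"
      proof (cases "s = a")
        case True then show ?thesis using h by simp
      next
        case False
        then have "R (f a) (f s)" using a s by simp
        then show ?thesis using trans[of "f (Suc n)" "f a" "f s"] h Suc.prems s a by simp
      qed
    qed
    then show ?thesis by blast
  qed
qed

lemma cyc_perms_self: "W \<in> cyc_perms W"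
  unfolding cyc_perms_def by force

lemma cyc_perms_shift:
  assumes "X \<in> cyc_perms W" and "X = A @ B"
  shows "B @ A \<in> cyc_perms W"
proof -
  from assms(1) obtain U V where W: "W = U @ V" and X: "X = V @ U" unfolding cyc_perms_def by blast
  from X assms(2) have "V @ U = A @ B" by simp
  then obtain C where "(V = A @ C \<and> C @ U = B) \<or> (A = V @ C \<and> U = C @ B)"
    by (auto simp: append_eq_append_conv2)
  then show ?thesis
  proof
    assume h: "V = A @ C \<and> C @ U = B"
    then have "W = (U @ A) @ C" "B @ A = C @ (U @ A)" using W by auto
    then show ?thesis unfolding cyc_perms_def by blast
  next
    assume h: "A = V @ C \<and> U = C @ B"
    then have "W = C @ (B @ V)" "B @ A = (B @ V) @ C" using W by auto
    then show ?thesis unfolding cyc_perms_def by blast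
  qed
qed

lemma cyc_perms_sym: "X \<in> cyc_perms W \<Longrightarrow> W \<in> cyc_perms X"
  unfolding cyc_perms_def by blast

lemma cyc_perms_trans: "X \<in> cyc_perms Y \<Longrightarrow> Y \<in> cyc_perms Z \<Longrightarrow> X \<in> cyc_perms Z"
proof -
  assume a: "X \<in> cyc_perms Y" "Y \<in> cyc_perms Z"
  from a(1) obtain U V where "Y = U @ V" "X = V @ U" unfolding cyc_perms_def by blast
  with a(2) cyc_perms_shift show ?thesis by blast
qed

lemma cyc_perms_inv: "X \<in> cyc_perms W \<Longrightarrow> word_inv X \<in> cyc_perms (word_inv W)"
proof -
  assume "X \<in> cyc_perms W"
  then obtain U V where "W = U @ V" "X = V @ U" unfolding cyc_perms_def by blast
  then have "word_inv W = word_inv V @ word_inv U" "word_inv X = word_inv U @ word_inv V" by simp_all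
  then show ?thesis unfolding cyc_perms_def by blast
qed

lemma cyc_perms_rot: "X \<in> cyc_perms W \<Longrightarrow> \<exists>d\<le>length W. X = drop d W @ take d W"
proof -
  assume "X \<in> cyc_perms W"
  then obtain U V where "W = U @ V" "X = V @ U" unfolding cyc_perms_def by blast
  then show ?thesis by (intro exI[of _ "length U"]) simp
qed

lemma rot_in_cyc: "drop d W @ take d W \<in> cyc_perms W"
  unfolding cyc_perms_def by (metis (mono_tags, lifting) CollectI append_take_drop_id)

lemma R_set_self: "W \<in> R_set W"
  by (simp add: R_set_def cyc_perms_self)

lemma R_set_inv: "V \<in> R_set W \<Longrightarrow> word_inv V \<in> R_set W"
  unfolding R_set_def using cyc_perms_inv[of V "word_inv W"] cyc_perms_inv[of V W] by auto

lemma R_set_shift: "V \<in> R_set W \<Longrightarrow> V = A @ B \<Longrightarrow> B @ A \<in> R_set W"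
  unfolding R_set_def using cyc_perms_shift by blast

lemma cyc_red_cyc_perms:
  assumes cr: "cyclically_reduced W" and X: "X \<in> cyc_perms W"
  shows "cyclically_reduced X"
proof -
  from X obtain A B where W: "W = A @ B" and XB: "X = B @ A" unfolding cyc_perms_def by blast
  have r2: "reduced (W @ W)" using cr by (simp add: cyc_red_iff)
  have r3: "reduced (W @ W @ W)"
  proof (cases "W = []")
    case True then show ?thesis by simp
  next
    case False
    then show ?thesis using r2 by (auto simp: reduced_append)
  qed
  have "W @ W @ W = A @ (B @ A @ B @ A) @ B" using W by simp
  with r3 have "reduced (B @ A @ B @ A)" by (metis reduced_mid)
  then show ?thesis using XB by (simp add: cyc_red_iff)
qed

lemma cyc_red_inv: "cyclically_reduced W \<Longrightarrow> cyclically_reduced (word_inv W)"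
  by (simp add: cyc_red_iff reduced_word_inv[of "W @ W", simplified])

lemma R_set_cyc_red: "cyclically_reduced W \<Longrightarrow> V \<in> R_set W \<Longrightarrow> cyclically_reduced V"
  unfolding R_set_def using cyc_red_cyc_perms cyc_red_inv by blast

lemma cyc_red_reduced: "cyclically_reduced V \<Longrightarrow> reduced V"
  by (simp add: cyclically_reduced_def)

lemma R_set_reduced: "cyclically_reduced W \<Longrightarrow> V \<in> R_set W \<Longrightarrow> reduced V"
  using R_set_cyc_red cyc_red_reduced by blast

lemma R_set_cases:
  assumes a1: "V1 \<in> R_set W" and a2: "V2 \<in> R_set W"
  shows "V2 \<in> cyc_perms V1 \<or> word_inv V2 \<in> cyc_perms V1"
proof -
  have k: "word_inv (word_inv W) = W" by simp
  have c1: "Y \<in> cyc_perms V1" if "V1 \<in> cyc_perms X" "Y \<in> cyc_perms X" for X Y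
    using that cyc_perms_sym cyc_perms_trans by blast
  show ?thesis
  proof (cases "V1 \<in> cyc_perms W")
    case True
    show ?thesis
    proof (cases "V2 \<in> cyc_perms W")
      case True
      then show ?thesis using c1 \<open>V1 \<in> cyc_perms W\<close> by blast
    next
      case False
      then have "V2 \<in> cyc_perms (word_inv W)" using a2 by (simp add: R_set_def)
      then have "word_inv V2 \<in> cyc_perms W" using cyc_perms_inv[of V2 "word_inv W"] by simp
      then show ?thesis using c1 True by blast
    qed
  next
    case False
    then have v1: "V1 \<in> cyc_perms (word_inv W)" using a1 by (simp add: R_set_def)
    show ?thesis
    proof (cases "V2 \<in> cyc_perms W")
      case True
      then have "word_inv V2 \<in> cyc_perms (word_inv W)" by (rule cyc_perms_inv)
      then show ?thesis using c1 v1 by blast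
    next
      case False
      then have "V2 \<in> cyc_perms (word_inv W)" using a2 by (simp add: R_set_def)
      then show ?thesis using c1 v1 by blast
    qed
  qed
qed

lemma R_set_cases2:
  assumes "V1 \<in> R_set W" "V2 \<in> R_set W" "V1 \<noteq> []"
  shows "\<exists>d<length V1. V2 = drop d V1 @ take d V1 \<or> V2 = word_inv (drop d V1 @ take d V1)"
proof -
  have aux: "\<exists>d<length V1. X = drop d V1 @ take d V1" if "X \<in> cyc_perms V1" for X
  proof -
    from cyc_perms_rot[OF that] obtain d where d: "d \<le> length V1" "X = drop d V1 @ take d V1" by blast
    show ?thesis
    proof (cases "d = length V1")
      case True
      then have "X = drop 0 V1 @ take 0 V1" using d by simp
      then show ?thesis using assms(3) by (intro exI[of _ 0]) simp
    next
      case False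
      then show ?thesis using d by (intro exI[of _ d]) auto
    qed
  qed
  from R_set_cases[OF assms(1,2)] show ?thesis
  proof
    assume "V2 \<in> cyc_perms V1" then show ?thesis using aux by blast
  next
    assume "word_inv V2 \<in> cyc_perms V1"
    then obtain d where "d < length V1" "word_inv V2 = drop d V1 @ take d V1" using aux by blast
    then show ?thesis by (metis word_inv_inv)
  qed
qed

definition val :: "'a word \<Rightarrow> nat \<Rightarrow> nat \<Rightarrow> 'a word" where
  "val V i k = fmult (word_inv (take i V)) (take k V)"

lemma val_le:
  assumes r: "reduced V" and ik: "i \<le> k"
  shows "val V i k = drop i (take k V)"
proof -
  have t: "take k V = take i V @ drop i (take k V)"
    using ik by (metis append_take_drop_id min.absorb1 take_take)
  have rd: "reduced (drop i (take k V))" using r by (simp add: reduced_drop reduced_take)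
  have "val V i k = red (word_inv (take i V) @ take i V @ drop i (take k V))"
    unfolding val_def fmult_def by (subst t) simp
  also have "\<dots> = drop i (take k V)" using red_inv_cancel red_id rd by metis
  finally show ?thesis .
qed

lemma val_ge:
  assumes r: "reduced V" and ik: "k \<le> i"
  shows "val V i k = word_inv (drop k (take i V))"
proof -
  define D where "D = drop k (take i V)"
  have t: "take i V = take k V @ D"
    using ik unfolding D_def by (metis append_take_drop_id min.absorb1 take_take)
  have rd: "reduced (word_inv D)" using r by (simp add: D_def reduced_drop reduced_take reduced_word_inv)
  have "val V i k = red (word_inv D @ (word_inv (take k V) @ take k V))"
    unfolding val_def fmult_def by (subst t) simp
  also have "\<dots> = red (word_inv D @ red (word_inv (take k V) @ take k V @ []))"
    by (simp add: red_append_red[symmetric])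
  also have "\<dots> = word_inv D" using red_inv_cancel[of "take k V" "[]"] rd by (simp add: red_id)
  finally show ?thesis by (simp add: D_def)
qed

lemma val_0: "reduced V \<Longrightarrow> val V 0 k = take k V"
  by (simp add: val_le)

lemma val_reduced: "reduced (val V i k)"
  by (simp add: val_def fmult_reduced)

lemma take_word_inv: "take j (word_inv D) = word_inv (drop (length D - j) D)"
  by (simp add: word_inv_def take_rev drop_map)

lemma drop_word_inv: "drop j (word_inv D) = word_inv (take (length D - j) D)"
  by (simp add: word_inv_def drop_rev take_map)

lemma prefix_take: "prefix P A \<Longrightarrow> P = take (length P) A"
  by (auto simp: prefix_def)

lemma suffix_drop: "suffix S A \<Longrightarrow> S = drop (length A - length S) A"
  by (auto simp: suffix_def)

lemma prefix_length: "prefix P A \<Longrightarrow> length P \<le> length A"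
  by (auto simp: prefix_def)

lemma suffix_length: "suffix S A \<Longrightarrow> length S \<le> length A"
  by (auto simp: suffix_def)

lemma window:
  assumes bo: "bi_order lt" and cr: "cyclically_reduced W" and mx: "is_max_ascent lt W M"
    and V: "V \<in> R_set W" and ik: "i \<le> length V" "k \<le> length V" "i \<noteq> k" and vM: "val V i k = M"
  shows "\<forall>s\<le>length V. (s \<noteq> i \<longrightarrow> lt (take i V) (take s V)) \<and> (s \<noteq> k \<longrightarrow> lt (take s V) (take k V))"
proof -
  define n where "n = length V"
  have rV: "reduced V" using R_set_reduced[OF cr V] .
  have rT: "\<And>s. reduced (take s V)" using rV by (simp add: reduced_take)
  have injT: "\<And>s t. s \<le> n \<Longrightarrow> t \<le> n \<Longrightarrow> s \<noteq> t \<Longrightarrow> take s V \<noteq> take t V"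
  proof
    fix s t assume st: "s \<le> n" "t \<le> n" "s \<noteq> t" "take s V = take t V"
    show False using st(1-3) arg_cong[OF st(4), of length] by (simp add: n_def)
  qed
  have trans1: "\<And>x y z. x \<in> {x. reduced x} \<Longrightarrow> y \<in> {x. reduced x} \<Longrightarrow> z \<in> {x. reduced x} \<Longrightarrow> lt x y \<Longrightarrow> lt y z \<Longrightarrow> lt x z"
    by (rule lt_trans[OF bo]) auto
  have total1: "\<And>x y. x \<in> {x. reduced x} \<Longrightarrow> y \<in> {x. reduced x} \<Longrightarrow> x \<noteq> y \<Longrightarrow> lt x y \<or> lt y x"
    using lt_total[OF bo] by auto
  have inS: "\<And>s. s \<le> n \<Longrightarrow> take s V \<in> {x. reduced x}" using rT by simp
  have exa: "\<exists>a\<le>n. \<forall>s\<le>n. s \<noteq> a \<longrightarrow> lt (take a V) (take s V)"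
    by (rule exists_least[of "{x. reduced x}" lt n "\<lambda>s. take s V", OF trans1 total1 inS injT])
  then obtain a where a: "a \<le> n" "\<forall>s\<le>n. s \<noteq> a \<longrightarrow> lt (take a V) (take s V)"
    by (elim exE conjE) (rule that)
  have trans2: "\<And>x y z. x \<in> {x. reduced x} \<Longrightarrow> y \<in> {x. reduced x} \<Longrightarrow> z \<in> {x. reduced x} \<Longrightarrow> lt y x \<Longrightarrow> lt z y \<Longrightarrow> lt z x"
    by (rule lt_trans[OF bo]) auto
  have total2: "\<And>x y. x \<in> {x. reduced x} \<Longrightarrow> y \<in> {x. reduced x} \<Longrightarrow> x \<noteq> y \<Longrightarrow> lt y x \<or> lt x y"
    using lt_total[OF bo] by auto
  have exb: "\<exists>b\<le>n. \<forall>s\<le>n. s \<noteq> b \<longrightarrow> lt (take s V) (take b V)"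
    by (rule exists_least[of "{x. reduced x}" "\<lambda>x y. lt y x" n "\<lambda>s. take s V", OF trans2 total2 inS injT])
  then obtain b where b: "b \<le> n" "\<forall>s\<le>n. s \<noteq> b \<longrightarrow> lt (take s V) (take b V)"
    by (elim exE conjE) (rule that)
  have ab: "a = i \<and> b = k"
  proof (rule ccontr)
    assume ne: "\<not> (a = i \<and> b = k)"
    have hx: "take a V = take i V \<or> lt (take a V) (take i V)"
      using a ik n_def by (cases "a = i") auto
    have hy: "take b V = take k V \<or> lt (take k V) (take b V)"
      using b ik n_def by (cases "b = k") auto
    have ne2: "\<not> (take a V = take i V \<and> take b V = take k V)"
      using ne injT a b ik n_def by blast
    have ltM: "lt M (val V a b)"
      using mono2[OF bo rT rT rT rT hx hy ne2] vM unfolding val_def by simp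
    have anb: "a \<noteq> b"
    proof
      assume "a = b"
      obtain s where s: "s \<le> n" "s \<noteq> a"
      proof (cases "i = a")
        case True
        then show ?thesis using that[of k] ik n_def by simp
      next
        case False
        then show ?thesis using that[of i] ik n_def by simp
      qed
      have "lt (take a V) (take s V)" "lt (take s V) (take a V)"
        using a b s \<open>a = b\<close> by auto
      then show False using lt_asym[OF bo] rT by blast
    qed
    define A where "A = val V a b"
    have asc: "(\<exists>V'\<in>R_set W. subword A V') \<and> ascent lt A"
    proof (cases "a < b")
      case True
      have A: "A = drop a (take b V)" unfolding A_def using val_le[OF rV] True by simp
      have lA: "length A = b - a" using A b n_def by simp
      have "take b V = take a V @ A"
        using append_take_drop_id[of a "take b V"] True A by (simp add: min_def)
      then have eqV: "V = take a V @ A @ drop b V" using append_take_drop_id[of b V] by simp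
      have sub: "subword A V" unfolding subword_def using eqV by auto
      have asc: "ascent lt A" unfolding ascent_def
      proof (intro conjI allI impI)
        fix P assume P: "P \<noteq> []" "prefix P A"
        define j where "j = length P"
        have j: "0 < j" "j \<le> b - a" using P(1) prefix_length[OF P(2)] lA j_def by simp_all
        have "P = take j A" using prefix_take[OF P(2)] j_def by simp
        also have "\<dots> = drop a (take (j + a) V)"
          using A j by (simp add: take_drop min_def)
        also have "\<dots> = val V a (a + j)" using val_le[OF rV, of a "a + j"] by (simp add: add.commute)
        finally have Pv: "P = val V a (a + j)" .
        have "lt (take a V) (take (a + j) V)" using a j b by simp
        then show "lt [] P" using pos_of_lt[OF bo rT rT] Pv unfolding val_def by simp
      next
        fix S assume S: "S \<noteq> []" "suffix S A"
        define j where "j = length S"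
        have j: "0 < j" "j \<le> b - a" using S(1) suffix_length[OF S(2)] lA j_def by simp_all
        have "S = drop (b - a - j) A" using suffix_drop[OF S(2)] j_def lA by simp
        also have "\<dots> = drop (b - j) (take b V)"
          using A j by (simp add: drop_drop)
        also have "\<dots> = val V (b - j) b" using val_le[OF rV, of "b - j" b] by simp
        finally have Sv: "S = val V (b - j) b" .
        have "lt (take (b - j) V) (take b V)" using b j by simp
        then show "lt [] S" using pos_of_lt[OF bo rT rT] Sv unfolding val_def by simp
      qed
      show ?thesis using sub asc V by auto
    next
      case False
      with anb have ba: "b < a" by simp
      define D where "D = drop b (take a V)"
      have A: "A = word_inv D" unfolding A_def D_def using val_ge[OF rV] ba by simp
      have lD: "length D = a - b" using D_def a n_def by simp
      have "take a V = take b V @ D"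
        using append_take_drop_id[of b "take a V"] ba unfolding D_def by (simp add: min_def)
      then have eqV: "V = take b V @ D @ drop a V" using append_take_drop_id[of a V] by simp
      have "word_inv V = word_inv (drop a V) @ word_inv D @ word_inv (take b V)"
        by (subst eqV) simp
      then have "word_inv V = word_inv (drop a V) @ A @ word_inv (take b V)"
        using A by simp
      then have sub: "subword A (word_inv V)" unfolding subword_def by auto
      have asc: "ascent lt A" unfolding ascent_def
      proof (intro conjI allI impI)
        fix P assume P: "P \<noteq> []" "prefix P A"
        define j where "j = length P"
        have j: "0 < j" "j \<le> a - b" using P(1) prefix_length[OF P(2)] lD A j_def by simp_all
        have "P = take j A" using prefix_take[OF P(2)] j_def by simp
        also have "\<dots> = word_inv (drop (a - b - j) D)" using A lD by (simp add: take_word_inv)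
        also have "drop (a - b - j) D = drop (a - j) (take a V)"
          using j ba unfolding D_def by (simp add: drop_drop)
        also have "word_inv (drop (a - j) (take a V)) = val V a (a - j)"
          using val_ge[OF rV, of "a - j" a] by simp
        finally have Pv: "P = val V a (a - j)" .
        have "lt (take a V) (take (a - j) V)" using a j by simp
        then show "lt [] P" using pos_of_lt[OF bo rT rT] Pv unfolding val_def by simp
      next
        fix S assume S: "S \<noteq> []" "suffix S A"
        define j where "j = length S"
        have j: "0 < j" "j \<le> a - b" using S(1) suffix_length[OF S(2)] lD A j_def by simp_all
        have "S = drop (a - b - j) A" using suffix_drop[OF S(2)] j_def lD A by simp
        also have "\<dots> = word_inv (take j D)" using A lD j by (simp add: drop_word_inv)
        also have "take j D = drop b (take (j + b) V)"
          using j ba unfolding D_def by (simp add: take_drop)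
        also have "word_inv (drop b (take (j + b) V)) = val V (b + j) b"
          using val_ge[OF rV, of b "b + j"] by (simp add: add.commute)
        finally have Sv: "S = val V (b + j) b" .
        have "lt (take (b + j) V) (take b V)" using b j a by simp
        then show "lt [] S" using pos_of_lt[OF bo rT rT] Sv unfolding val_def by simp
      qed
      show ?thesis using sub asc R_set_inv[OF V] by auto
    qed
    then have "A = M \<or> lt A M" using mx unfolding is_max_ascent_def by blast
    moreover have rM: "reduced M" using vM val_reduced by metis
    moreover have rA: "reduced A" unfolding A_def by (rule val_reduced)
    ultimately show False
    proof (elim disjE)
      assume "A = M"
      then show False using ltM A_def lt_irrefl[OF bo] rM by simp
    next
      assume "lt A M"
      then show False using ltM A_def lt_asym[OF bo] rM rA by blast
    qed
  qed
  then have "\<forall>s\<le>n. s \<noteq> i \<longrightarrow> lt (take i V) (take s V)" "\<forall>s\<le>n. s \<noteq> k \<longrightarrow> lt (take s V) (take k V)"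
    using a(2) b(2) by simp_all
  then show ?thesis unfolding n_def by blast
qed

lemma pair_unique:
  assumes bo: "bi_order lt" and cr: "cyclically_reduced W" and mx: "is_max_ascent lt W M"
    and V: "V \<in> R_set W"
    and ik: "i \<le> length V" "k \<le> length V" "i \<noteq> k" "val V i k = M"
    and ik': "i' \<le> length V" "k' \<le> length V" "i' \<noteq> k'" "val V i' k' = M"
  shows "i = i' \<and> k = k'"
proof -
  have rV: "reduced V" using R_set_reduced[OF cr V] .
  have rT: "\<And>s. reduced (take s V)" using rV by (simp add: reduced_take)
  note w1 = window[OF bo cr mx V ik]
  note w2 = window[OF bo cr mx V ik']
  show ?thesis
  proof (rule ccontr)
    assume "\<not> (i = i' \<and> k = k')"
    then have "i \<noteq> i' \<or> k \<noteq> k'" by simp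
    then show False
    proof (elim disjE)
      assume ne: "i \<noteq> i'"
      have 1: "lt (take i V) (take i' V)" using w1 ik'(1) ne by blast
      have 2: "lt (take i' V) (take i V)" using w2 ik(1) ne by blast
      from 1 2 show False using lt_asym[OF bo] rT by blast
    next
      assume ne: "k \<noteq> k'"
      have 1: "lt (take k' V) (take k V)" using w1 ik'(2) ne by blast
      have 2: "lt (take k V) (take k' V)" using w2 ik(2) ne by blast
      from 1 2 show False using lt_asym[OF bo] rT by blast
    qed
  qed
qed

lemma concat_rep_swap: "concat (replicate k X) @ X = X @ concat (replicate k X)"
  by (induction k) auto

lemma rotate1_concat_rep_aux: "concat (replicate k (x # U)) @ [x] = x # concat (replicate k (U @ [x]))"
  by (induction k) auto

lemma rotate1_concat_rep: "rotate1 (concat (replicate k U)) = concat (replicate k (rotate1 U))"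
proof (cases U)
  case Nil
  then show ?thesis by simp
next
  case (Cons x U')
  show ?thesis
  proof (cases k)
    case 0
    then show ?thesis by simp
  next
    case (Suc k')
    have "rotate1 (concat (replicate k U)) = U' @ concat (replicate k' (x # U')) @ [x]"
      using Cons Suc by simp
    also have "\<dots> = (U' @ [x]) @ concat (replicate k' (U' @ [x]))"
      by (simp add: rotate1_concat_rep_aux)
    also have "\<dots> = concat (replicate k (rotate1 U))" using Cons Suc by simp
    finally show ?thesis .
  qed
qed

lemma rotate_concat_rep: "rotate t (concat (replicate k U)) = concat (replicate k (rotate t U))"
  by (induction t) (auto simp: rotate1_concat_rep)

lemma word_inv_concat_rep: "word_inv (concat (replicate k U)) = concat (replicate k (word_inv U))"
  by (induction k) (auto simp: concat_rep_swap)

lemma drop_take_rotate: "d \<le> length xs \<Longrightarrow> drop d xs @ take d xs = rotate d xs"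
proof (cases "d = length xs")
  case True
  then show ?thesis by simp
next
  case False
  assume "d \<le> length xs"
  with False have "d < length xs" by simp
  then show ?thesis by (simp add: rotate_drop_take)
qed

lemma cyc_red_power:
  assumes "cyclically_reduced (concat (replicate k U))" "k \<ge> 1"
  shows "cyclically_reduced U"
proof -
  define P where "P = concat (replicate k U)"
  have "P @ P = concat (replicate (k + k) U)" unfolding P_def by (simp add: replicate_add)
  also have "k + k = Suc (Suc (k + k - 2))" using assms(2) by simp
  finally have "P @ P = (U @ U) @ concat (replicate (k + k - 2) U)" by simp
  moreover have "reduced (P @ P)" using assms(1) P_def by (simp add: cyc_red_iff)
  ultimately have "reduced (U @ U)" by (metis reduced_append)
  then show ?thesis by (simp add: cyc_red_iff)
qed

lemma periodic_of_R:
  assumes cr: "cyclically_reduced W" and V: "V \<in> R_set W"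
    and Vp: "V = concat (replicate k U)" and k: "k \<ge> 2"
  shows "periodic W"
proof -
  from R_set_cases[OF V R_set_self] have "W \<in> cyc_perms V \<or> word_inv W \<in> cyc_perms V" .
  then obtain U' where W: "W = concat (replicate k U')"
  proof
    assume "W \<in> cyc_perms V"
    then obtain d where "d \<le> length V" "W = drop d V @ take d V" using cyc_perms_rot by blast
    then have "W = rotate d V" by (simp add: drop_take_rotate)
    then have "W = concat (replicate k (rotate d U))" using Vp by (simp add: rotate_concat_rep)
    then show ?thesis using that by blast
  next
    assume "word_inv W \<in> cyc_perms V"
    then obtain d where "d \<le> length V" "word_inv W = drop d V @ take d V" using cyc_perms_rot by blast
    then have "word_inv W = rotate d V" by (simp add: drop_take_rotate)
    then have "word_inv W = concat (replicate k (rotate d U))" using Vp by (simp add: rotate_concat_rep)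
    then have "W = word_inv (concat (replicate k (rotate d U)))" by (metis word_inv_inv)
    then have "W = concat (replicate k (word_inv (rotate d U)))" by (simp add: word_inv_concat_rep)
    then show ?thesis using that by blast
  qed
  have "cyclically_reduced U'" using cyc_red_power[of k U'] W cr k by simp
  then show ?thesis unfolding periodic_def using W k by (intro exI[of _ U'] exI[of _ k]) auto
qed

lemma self_inv_False:
  assumes r: "reduced S" and ne: "S \<noteq> []" and e: "S = word_inv S"
  shows False
proof -
  define l where "l = length S"
  have nth: "\<And>i. i < l \<Longrightarrow> S ! i = inv_letter (S ! (l - 1 - i))"
  proof -
    fix i assume i: "i < l"
    have "S ! i = word_inv S ! i" using e by simp
    also have "\<dots> = inv_letter (S ! (l - 1 - i))"
      using i unfolding word_inv_def l_def by (simp add: rev_nth)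
    finally show "S ! i = inv_letter (S ! (l - 1 - i))" .
  qed
  have l0: "0 < l" using ne l_def by simp
  show False
  proof (cases "even l")
    case True
    define i where "i = l div 2 - 1"
    have i1: "Suc i < l" "l - 1 - (Suc i) = i" using True l0 unfolding i_def by (auto elim!: evenE)
    have "S ! Suc i = inv_letter (S ! i)" using nth[OF i1(1)] i1(2) by simp
    moreover have "S ! Suc i \<noteq> inv_letter (S ! i)" using r i1(1) unfolding reduced_def l_def by simp
    ultimately show False by simp
  next
    case False
    define i where "i = l div 2"
    have i1: "i < l" "l - 1 - i = i" using False l0 unfolding i_def by (auto elim!: oddE)
    have "S ! i = inv_letter (S ! i)" using nth[OF i1(1)] i1(2) by simp
    then show False by (metis inv_neq)
  qed
qed

context
  fixes lt :: "'a word \<Rightarrow> 'a word \<Rightarrow> bool"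
  assumes bo: "bi_order lt"
begin

definition sp :: "'a word \<Rightarrow> bool" where
  "sp X \<longleftrightarrow> (\<forall>S. S \<noteq> [] \<longrightarrow> suffix S X \<longrightarrow> lt [] S)"

definition pn :: "'a word \<Rightarrow> bool" where
  "pn G \<longleftrightarrow> (\<forall>P. P \<noteq> [] \<longrightarrow> prefix P G \<longrightarrow> lt P [])"

lemma eqn_core:
  assumes IH: "\<And>X' Y' G G'. length X' + length Y' < N \<Longrightarrow> Y' @ G' @ X' = X' @ G @ Y' \<Longrightarrow>
      reduced X' \<Longrightarrow> reduced Y' \<Longrightarrow> reduced G \<Longrightarrow> reduced G' \<Longrightarrow> sp X' \<Longrightarrow> sp Y' \<Longrightarrow> pn G \<Longrightarrow> pn G' \<Longrightarrow>
      length G = length G' \<Longrightarrow> G \<noteq> G' \<Longrightarrow> False"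
    and N: "length X + length Y = N"
    and eq: "Y @ G' @ X = X @ G @ Y"
    and r: "reduced X" "reduced Y" "reduced G" "reduced G'"
    and s: "sp X" "sp Y" and p: "pn G" "pn G'"
    and lG: "length G = length G'" and nG: "G \<noteq> G'"
    and le: "length Y \<le> length X"
  shows False
proof -
  have tk: "take (length X) (Y @ G' @ X) = take (length X) (X @ G @ Y)" using eq by simp
  have tX: "take (length X) (X @ G @ Y) = X" by simp
  consider (eq) "length X = length Y" | (mid) "length Y < length X" "length X \<le> length Y + length G'"
    | (big) "length Y + length G' < length X" using le by linarith
  then show False
  proof cases
    case eq
    then have "take (length X) (Y @ G' @ X) = Y" by simp
    with tk tX have XY: "X = Y" by simp
    with \<open>Y @ G' @ X = X @ G @ Y\<close> have "G' @ X = G @ X" by simp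
    then have "G' = G" by simp
    with nG show False by simp
  next
    case mid
    define P where "P = take (length X - length Y) G'"
    have "take (length X) (Y @ G' @ X) = Y @ P"
      using mid unfolding P_def by simp
    with tk tX have XP: "X = Y @ P" by simp
    have "0 < length G'" using mid by linarith
    then have Pne: "P \<noteq> []" using mid unfolding P_def by simp
    have rP: "reduced P" unfolding P_def using r(4) by (rule reduced_take)
    have "prefix P G'" unfolding P_def by (rule take_is_prefix)
    then have 1: "lt P []" using p(2) Pne unfolding pn_def by simp
    have "suffix P X" using XP by (simp add: suffix_def)
    then have 2: "lt [] P" using s(1) Pne unfolding sp_def by simp
    from 1 2 show False using lt_asym[OF bo] rP by (metis reduced_Nil)
  next
    case big
    define X0 where "X0 = drop (length Y + length G') X"
    have "take (length Y + length G') X = take (length Y + length G') (take (length X) (X @ G @ Y))"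
      using big by simp
    also have "\<dots> = take (length Y + length G') (take (length X) (Y @ G' @ X))" using tk by simp
    also have "\<dots> = Y @ G'" using big by simp
    finally have tY: "take (length Y + length G') X = Y @ G'" .
    have XX: "X = Y @ G' @ X0" unfolding X0_def using tY append_take_drop_id[of "length Y + length G'" X] by simp
    have eq0: "Y @ G' @ X0 = X0 @ G @ Y"
    proof -
      have "(Y @ G') @ (Y @ G' @ X0) = (Y @ G') @ (X0 @ G @ Y)" using eq XX by simp
      then show ?thesis by simp
    qed
    have rX0: "reduced X0" unfolding X0_def using r(1) by (rule reduced_drop)
    have sX0: "sp X0" unfolding sp_def
    proof (intro allI impI)
      fix S assume "S \<noteq> []" "suffix S X0"
      moreover have "suffix X0 X" using XX by (simp add: suffix_def)
      ultimately show "lt [] S" using s(1) unfolding sp_def by (meson suffix_order.trans)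
    qed
    have Gne: "G' \<noteq> []" using lG nG by auto
    have "0 < length G'" using Gne by simp
    moreover have "length X = length Y + length G' + length X0" using XX by simp
    ultimately have "length X0 + length Y < N" using N by linarith
    then show False using IH[OF _ eq0 rX0 r(2) r(3) r(4) sX0 s(2) p lG nG] by simp
  qed
qed

lemma eqn_contra:
  "Y @ G' @ X = X @ G @ Y \<Longrightarrow> reduced X \<Longrightarrow> reduced Y \<Longrightarrow> reduced G \<Longrightarrow> reduced G' \<Longrightarrow>
   sp X \<Longrightarrow> sp Y \<Longrightarrow> pn G \<Longrightarrow> pn G' \<Longrightarrow> length G = length G' \<Longrightarrow> G \<noteq> G' \<Longrightarrow> False"
proof (induction "length X + length Y" arbitrary: X Y G G' rule: less_induct)
  case less
  note IH = less.hyps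
  show False
  proof (cases "length Y \<le> length X")
    case True
    show False
      by (rule eqn_core[OF _ refl less.prems True]) (rule IH, assumption+)
  next
    case False
    have eq': "X @ G @ Y = Y @ G' @ X" using less.prems(1) by simp
    have Nc: "length Y + length X = length X + length Y" by simp
    have l2: "length G' = length G" "G' \<noteq> G" using less.prems(10,11) by auto
    have le2: "length X \<le> length Y" using False by simp
    show False
      by (rule eqn_core[OF IH Nc eq' less.prems(3) less.prems(2) less.prems(5) less.prems(4)
            less.prems(7) less.prems(6) less.prems(9) less.prems(8) l2 le2])
  qed
qed

end

lemma gap_neg:
  assumes bo: "bi_order lt" and cr: "cyclically_reduced W" and mx: "is_max_ascent lt W M"
    and V: "V \<in> R_set W" and m: "0 < m" "m \<le> length V" and tm: "take m V = M"
  shows "pn lt (drop m V)"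
  unfolding pn_def[OF bo]
proof (intro allI impI)
  fix P assume P: "P \<noteq> []" "prefix P (drop m V)"
  have rV: "reduced V" using R_set_reduced[OF cr V] .
  have rT: "\<And>s. reduced (take s V)" using rV by (simp add: reduced_take)
  have v: "val V 0 m = M" using val_0[OF rV] tm by simp
  note w = window[OF bo cr mx V _ m(2) _ v]
  define j where "j = length P"
  have j: "0 < j" "j \<le> length V - m" using P(1) prefix_length[OF P(2)] j_def by simp_all
  have "P = take j (drop m V)" using prefix_take[OF P(2)] j_def by simp
  also have "\<dots> = drop m (take (j + m) V)" by (rule take_drop)
  also have "\<dots> = val V m (m + j)" using val_le[OF rV, of m "m + j"] by (simp add: add.commute)
  finally have Pv: "P = val V m (m + j)" .
  have "lt (take (m + j) V) (take m V)" using w m j by simp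
  then show "lt P []" using neg_of_lt[OF bo rT rT] Pv unfolding val_def by simp
qed

lemma sp_of_suffix:
  assumes bo: "bi_order lt" and asc: "ascent lt M" and s: "suffix Y M"
  shows "sp lt Y"
  unfolding sp_def[OF bo]
proof (intro allI impI)
  fix S assume "S \<noteq> []" "suffix S Y"
  moreover have "suffix S M" using \<open>suffix S Y\<close> s by (meson suffix_order.trans)
  ultimately show "lt [] S" using asc unfolding ascent_def by blast
qed

lemma unique_prefix:
  assumes bo: "bi_order lt" and cr: "cyclically_reduced W" and np: "\<not> periodic W"
    and mx: "is_max_ascent lt W M" and Mne: "M \<noteq> []"
    and V1: "V1 \<in> R_set W" and V2: "V2 \<in> R_set W" and p1: "prefix M V1" and p2: "prefix M V2"
  shows "V1 = V2"
proof (rule ccontr)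
  assume ne: "V1 \<noteq> V2"
  define n where "n = length V1"
  define m where "m = length M"
  have rV1: "reduced V1" using R_set_reduced[OF cr V1] .
  have rV2: "reduced V2" using R_set_reduced[OF cr V2] .
  have m0: "0 < m" using Mne m_def by simp
  have mn: "m \<le> n" using prefix_length[OF p1] m_def n_def by simp
  have V1ne: "V1 \<noteq> []" using m0 mn n_def by auto
  have M1: "take m V1 = M" using prefix_take[OF p1] m_def by simp
  have M2: "take m V2 = M" using prefix_take[OF p2] m_def by simp
  obtain d where d: "d < n" and cs: "V2 = drop d V1 @ take d V1 \<or> V2 = word_inv (drop d V1 @ take d V1)"
    using R_set_cases2[OF V1 V2 V1ne] n_def by blast
  have lV2: "length V2 = n" using cs n_def d by auto
  have vM1: "val V1 0 m = M" using val_0[OF rV1] M1 by simp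
  have vM2: "val V2 0 m = M" using val_0[OF rV2] M2 by simp
  have mltn: "m < n"
  proof (rule ccontr)
    assume "\<not> m < n"
    with mn have "m = n" by simp
    then have "V1 = M" "V2 = M" using M1 M2 n_def lV2 by simp_all
    with ne show False by simp
  qed
  from cs show False
  proof
    assume a: "V2 = drop d V1 @ take d V1"
    have d0: "d \<noteq> 0"
    proof
      assume "d = 0"
      then have "V2 = V1" using a by simp
      with ne show False by simp
    qed
    have ldrop: "length (drop d V1) = n - d" using n_def by simp
    consider (a1) "d + m \<le> n" | (a2) "m \<le> d" "\<not> d + m \<le> n" | (a3) "d < m" "n < d + m" by linarith
    then show False
    proof cases
      case a1
      have "val V1 d (d + m) = drop d (take (d + m) V1)" by (rule val_le[OF rV1]) simp
      also have "\<dots> = take m (drop d V1)" by (simp add: drop_take)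
      also have "\<dots> = take m V2" using a a1 ldrop by simp
      finally have vd: "val V1 d (d + m) = M" using M2 by simp
      have "0 = d \<and> m = d + m"
        by (rule pair_unique[OF bo cr mx V1 _ _ _ vM1 _ _ _ vd]) (use a1 m0 n_def mn in auto)
      then show False using d0 by simp
    next
      case a2
      have dr: "drop (n - d) V2 = take d V1" using a ldrop by simp
      have "val V2 (n - d) (n - d + m) = drop (n - d) (take (n - d + m) V2)" by (rule val_le[OF rV2]) simp
      also have "\<dots> = take m (drop (n - d) V2)" by (simp add: drop_take)
      also have "\<dots> = take m V1" using dr a2 by simp
      finally have vd: "val V2 (n - d) (n - d + m) = M" using M1 by simp
      have "0 = n - d \<and> m = n - d + m"
        by (rule pair_unique[OF bo cr mx V2 _ _ _ vM2 _ _ _ vd]) (use a2 m0 lV2 mn d in auto)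
      then show False using d by simp
    next
      case a3
      define e where "e = n - d"
      define Y where "Y = take (m - e) M"
      define G' where "G' = drop (m - e) (take d M)"
      define Z where "Z = drop d M"
      define G where "G = drop m V1"
      have e1: "m - e \<le> d" "d \<le> m" using a3 mn e_def by auto
      have lM: "length M = m" using m_def by simp
      have MYZ: "M = Y @ G' @ Z"
      proof -
        have "take (m - e) M = take (m - e) (take d M)" using e1 by (simp add: min_def)
        then have YG: "Y @ G' = take d M" unfolding Y_def G'_def
          using append_take_drop_id[of "m - e" "take d M"] by simp
        have "M = take d M @ drop d M" by simp
        also have "\<dots> = (Y @ G') @ drop d M" using YG by simp
        finally show ?thesis unfolding Z_def by simp
      qed
      have MZY: "M = Z @ G @ Y"
      proof -
        have "M = take m (drop d V1 @ take d V1)" using M2 a by simp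
        also have "\<dots> = drop d V1 @ take (m - e) (take d V1)" using ldrop e_def a3 by simp
        also have "take (m - e) (take d V1) = Y" unfolding Y_def using e1 M1[symmetric] by (simp add: min_def)
        also have "drop d V1 = Z @ G"
        proof -
          have h: "drop d (take m V1 @ drop m V1) = drop d (take m V1) @ drop (d - length (take m V1)) (drop m V1)"
            by (rule drop_append)
          have "d - length (take m V1) = 0" using e1 mn n_def by simp
          then have "drop d V1 = drop d (take m V1) @ drop m V1" using h by simp
          then show ?thesis unfolding Z_def G_def using M1 by simp
        qed
        finally show ?thesis by simp
      qed
      have lG: "length G = n - m" unfolding G_def n_def by simp
      have lG': "length G' = n - m" unfolding G'_def using lM e1 e_def a3 mn by simp
      have Gne: "G \<noteq> []" using lG mltn by auto
      have "reduced (take m V1)" using rV1 by (rule reduced_take)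
      then have rM: "reduced M" using M1 by simp
      have rY: "reduced Y" unfolding Y_def using rM by (rule reduced_take)
      have rZ: "reduced Z" unfolding Z_def using rM by (rule reduced_drop)
      have rG': "reduced G'" unfolding G'_def using rM by (simp add: reduced_take reduced_drop)
      have rG: "reduced G" unfolding G_def using rV1 by (rule reduced_drop)
      have pnG: "pn lt G" unfolding G_def by (rule gap_neg[OF bo cr mx V1 m0]) (use mn n_def M1 in simp_all)
      have dG': "drop m V2 = G'"
      proof -
        have "drop m V2 = drop (m - e) (take d V1)" using a ldrop e_def a3 by simp
        also have "\<dots> = G'" unfolding G'_def using M1[symmetric] e1 by (simp add: min_def)
        finally show ?thesis .
      qed
      have pnG': "pn lt G'" unfolding dG'[symmetric] by (rule gap_neg[OF bo cr mx V2 m0]) (use mn lV2 M2 in simp_all)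
      have ascM: "ascent lt M" using mx unfolding is_max_ascent_def by blast
      have spY: "sp lt Y" by (rule sp_of_suffix[OF bo ascM]) (use MZY in \<open>auto simp: suffix_def\<close>)
      have spZ: "sp lt Z" by (rule sp_of_suffix[OF bo ascM]) (use MYZ in \<open>auto simp: suffix_def\<close>)
      have eq: "Y @ G' @ Z = Z @ G @ Y" using MYZ MZY by simp
      have GG: "G \<noteq> G'"
      proof
        assume GG: "G = G'"
        have "(Y @ G) @ (Z @ G) = (Z @ G) @ (Y @ G)" using eq GG by simp
        then obtain a b U where ab: "concat (replicate a U) = Y @ G" "concat (replicate b U) = Z @ G"
          using comm_append_are_replicate by blast
        have a0: "a \<noteq> 0"
        proof
          assume "a = 0" then have "Y @ G = []" using ab(1) by simp
          with Gne show False by simp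
        qed
        have b0: "b \<noteq> 0"
        proof
          assume "b = 0" then have "Z @ G = []" using ab(2) by simp
          with Gne show False by simp
        qed
        have "V1 = M @ G" unfolding G_def using M1 append_take_drop_id[of m V1] by simp
        also have "\<dots> = (Y @ G) @ (Z @ G)" using MYZ GG by simp
        also have "\<dots> = concat (replicate (a + b) U)" using ab by (simp add: replicate_add)
        finally have "V1 = concat (replicate (a + b) U)" .
        then have "periodic W" using periodic_of_R[OF cr V1] a0 b0 by simp
        with np show False by simp
      qed
      show False
        by (rule eqn_contra[OF bo eq rZ rY rG rG' spZ spY pnG pnG']) (use lG lG' GG in simp_all)
    qed
  next
    assume b: "V2 = word_inv (drop d V1 @ take d V1)"
    define R where "R = drop d V1 @ take d V1"
    have ldrop: "length (drop d V1) = n - d" using n_def by simp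
    obtain T where T: "V2 = M @ T" using p2 by (auto simp: prefix_def)
    have "length V2 = m + length T" using T m_def by simp
    then have lT: "length T = n - m" using lV2 by simp
    have "R = word_inv V2" using b R_def by simp
    also have "\<dots> = word_inv T @ word_inv M" using T by simp
    finally have wM: "drop (n - m) R = word_inv M" using lT by simp
    consider (b1) "m \<le> d" | (b2) "d < m" by linarith
    then show False
    proof cases
      case b1
      have "drop (n - m) R = drop (d - m) (take d V1)"
        unfolding R_def using ldrop b1 d by simp
      then have wM': "word_inv M = drop (d - m) (take d V1)" using wM by simp
      have "val V1 d (d - m) = word_inv (drop (d - m) (take d V1))" by (rule val_ge[OF rV1]) simp
      then have vd: "val V1 d (d - m) = M" using wM'[symmetric] by simp
      have "0 = d \<and> m = d - m"
        by (rule pair_unique[OF bo cr mx V1 _ _ _ vM1 _ _ _ vd]) (use b1 m0 n_def mn d in auto)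
      then show False using b1 m0 by simp
    next
      case b2
      define j where "j = n - m + d"
      have jn: "j < n" using j_def b2 mn by simp
      have dj: "d \<le> j" using j_def by simp
      have "drop (n - m) R = drop j V1 @ take d V1"
        unfolding R_def j_def using ldrop b2 mn by (simp add: add.commute)
      then have wM': "word_inv M = drop j V1 @ take d V1" using wM by simp
      have ldj: "length (drop j V1) = m - d" using j_def n_def mn b2 by simp
      consider (i) "m \<le> j" | (ii) "j < m" by linarith
      then show False
      proof cases
        case i
        define V3 where "V3 = drop j V1 @ take j V1"
        have V3: "V3 \<in> R_set W" unfolding V3_def by (rule R_set_shift[OF V1]) simp
        have rV3: "reduced V3" using R_set_reduced[OF cr V3] .
        have lV3: "length V3 = n" unfolding V3_def n_def using jn n_def by simp
        have "take m V3 = drop j V1 @ take d (take j V1)"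
          unfolding V3_def using ldj b2 by simp
        also have "\<dots> = word_inv M" using wM' dj by (simp add: min_def)
        finally have tm3: "take m V3 = word_inv M" .
        have "val V3 m 0 = word_inv (drop 0 (take m V3))" by (rule val_ge[OF rV3]) simp
        then have vA: "val V3 m 0 = M" using tm3 by simp
        have dr3: "drop (n - j) V3 = take j V1" unfolding V3_def using jn n_def by simp
        have "val V3 (n - j) (n - j + m) = drop (n - j) (take (n - j + m) V3)" by (rule val_le[OF rV3]) simp
        also have "\<dots> = take m (drop (n - j) V3)" by (simp add: drop_take)
        also have "\<dots> = take m V1" using dr3 i by simp
        finally have vB: "val V3 (n - j) (n - j + m) = M" using M1 by simp
        have "m = n - j \<and> 0 = n - j + m"
          by (rule pair_unique[OF bo cr mx V3 _ _ _ vA _ _ _ vB]) (use i m0 lV3 mn jn in auto)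
        then show False using m0 by simp
      next
        case ii
        define S where "S = take (m - j) (drop j V1)"
        have S1: "drop j M = S" unfolding S_def using M1[symmetric] by (simp add: drop_take)
        have "take (m - j) (word_inv M) = S" unfolding S_def using wM' ldj ii mn dj by simp
        moreover have "take (m - j) (word_inv M) = word_inv (drop j M)"
          using m_def ii by (simp add: take_word_inv)
        ultimately have Sinv: "S = word_inv S" using S1 by simp
        have Sne: "S \<noteq> []" unfolding S_def using ii mn n_def jn by simp
        have rS: "reduced S" unfolding S_def using rV1 by (simp add: reduced_take reduced_drop)
        show False using self_inv_False[OF rS Sne Sinv] .
      qed
    qed
  qed
qed

lemma finite_cyc_perms: "finite (cyc_perms W)"
proof -
  have "cyc_perms W \<subseteq> (\<lambda>d. drop d W @ take d W) ` {..length W}"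
    using cyc_perms_rot by fastforce
  then show ?thesis by (rule finite_subset) simp
qed

lemma finite_R_set: "finite (R_set W)"
  unfolding R_set_def using finite_cyc_perms[of W] finite_cyc_perms[of "word_inv W"] by simp

lemma subword_eq: "subword A V \<Longrightarrow> \<exists>i j. j \<le> length V \<and> A = drop i (take j V)"
proof -
  assume "subword A V"
  then obtain S U where V: "V = S @ A @ U" unfolding subword_def by blast
  then have "A = drop (length S) (take (length S + length A) V)" by simp
  moreover have "length S + length A \<le> length V" using V by simp
  ultimately show ?thesis by blast
qed

lemma finite_subwords: "finite {A. subword A V}"
proof -
  have "{A. subword A V} \<subseteq> (\<lambda>(i, j). drop i (take j V)) ` ({..length V} \<times> {..length V})"
  proof
    fix A assume "A \<in> {A. subword A V}"
    then obtain i j where ij: "j \<le> length V" "A = drop i (take j V)" using subword_eq by blast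
    show "A \<in> (\<lambda>(i, j). drop i (take j V)) ` ({..length V} \<times> {..length V})"
    proof (cases "i \<le> length V")
      case True
      then show ?thesis using ij by force
    next
      case False
      then have "A = drop (length V) (take j V)" using ij by simp
      then show ?thesis using ij by force
    qed
  qed
  then show ?thesis by (rule finite_subset) simp
qed

lemma subword_reduced: "cyclically_reduced W \<Longrightarrow> V \<in> R_set W \<Longrightarrow> subword A V \<Longrightarrow> reduced A"
proof -
  assume a: "cyclically_reduced W" "V \<in> R_set W" "subword A V"
  then obtain S U where "V = S @ A @ U" unfolding subword_def by blast
  moreover have "reduced V" using R_set_reduced[OF a(1,2)] .
  ultimately show "reduced A" using reduced_mid by blast
qed

lemma finite_max:
  assumes bo: "bi_order lt" and fin: "finite S" and ne: "S \<noteq> {}" and r: "\<forall>A\<in>S. reduced A"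
  shows "\<exists>M\<in>S. \<forall>A\<in>S. A = M \<or> lt A M"
  using fin ne r
proof (induction S rule: finite_ne_induct)
  case (singleton x)
  then show ?case by simp
next
  case (insert x F)
  then obtain M where M: "M \<in> F" "\<forall>A\<in>F. A = M \<or> lt A M" by auto
  have rx: "reduced x" and rM: "reduced M" using insert.prems M by auto
  from lt_total[OF bo rx rM] consider "x = M" | "lt x M" | "lt M x" by blast
  then show ?case
  proof cases
    case 1 then show ?thesis using M by auto
  next
    case 2 then show ?thesis using M by auto
  next
    case 3
    have "\<forall>A\<in>insert x F. A = x \<or> lt A x"
    proof
      fix A assume A: "A \<in> insert x F"
      show "A = x \<or> lt A x"
      proof (cases "A = x")
        case True then show ?thesis by simp
      next
        case False
        then have AF: "A \<in> F" using A by simp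
        then have rA: "reduced A" using insert.prems by auto
        from M(2) AF have "A = M \<or> lt A M" by simp
        then show ?thesis
        proof
          assume "A = M" then show ?thesis using 3 by simp
        next
          assume "lt A M" then show ?thesis using 3 lt_trans[OF bo rA rM rx] by simp
        qed
      qed
    qed
    then show ?thesis by blast
  qed
qed

lemma max_exists:
  assumes bo: "bi_order lt" and cr: "cyclically_reduced W"
  shows "\<exists>M. is_max_ascent lt W M"
proof -
  define S where "S = {A. (\<exists>V\<in>R_set W. subword A V) \<and> ascent lt A}"
  have "S \<subseteq> (\<Union>V\<in>R_set W. {A. subword A V})" unfolding S_def by blast
  moreover have "finite (\<Union>V\<in>R_set W. {A. subword A V})"
    using finite_R_set finite_subwords by blast
  ultimately have fin: "finite S" by (rule finite_subset)
  have "subword [] W" unfolding subword_def by (intro exI[of _ "[]"] exI[of _ W]) simp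
  moreover have "ascent lt []" unfolding ascent_def by (auto simp: prefix_def suffix_def)
  ultimately have "[] \<in> S" unfolding S_def using R_set_self by blast
  then have ne: "S \<noteq> {}" by blast
  have r: "\<forall>A\<in>S. reduced A" unfolding S_def using subword_reduced[OF cr] by blast
  from finite_max[OF bo fin ne r] obtain M where M: "M \<in> S" "\<forall>A\<in>S. A = M \<or> lt A M" by blast
  then have "is_max_ascent lt W M" unfolding is_max_ascent_def S_def by blast
  then show ?thesis by blast
qed

lemma ascent_single: "lt [] [y] \<Longrightarrow> ascent lt [y]"
proof -
  assume h: "lt [] [y]"
  have p: "P = [y]" if "P \<noteq> []" "prefix P [y]" for P
  proof -
    have "length P \<le> 1" using prefix_length[OF that(2)] by simp
    with that(1) have "length P = 1" by (cases P) auto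
    then show ?thesis using prefix_take[OF that(2)] by simp
  qed
  have s: "S = [y]" if "S \<noteq> []" "suffix S [y]" for S
  proof -
    have "length S \<le> 1" using suffix_length[OF that(2)] by simp
    with that(1) have "length S = 1" by (cases S) auto
    then show ?thesis using suffix_drop[OF that(2)] by simp
  qed
  show ?thesis unfolding ascent_def using h p s by auto
qed

lemma M_nonempty:
  assumes bo: "bi_order lt" and cr: "cyclically_reduced W" and Wne: "W \<noteq> []"
    and mx: "is_max_ascent lt W M"
  shows "M \<noteq> []"
proof -
  define x where "x = hd W"
  have Wx: "W = [] @ [x] @ tl W" using Wne x_def by simp
  obtain A0 where A0: "\<exists>V\<in>R_set W. subword A0 V" "ascent lt A0" "lt [] A0" "reduced A0"
  proof (cases "lt [] [x]")
    case True
    have "subword [x] W" using Wx unfolding subword_def by blast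
    then have "\<exists>V\<in>R_set W. subword [x] V" using R_set_self by blast
    then show ?thesis using that[of "[x]"] True ascent_single[of lt x] by simp
  next
    case False
    then have "lt [x] []" using lt_total[OF bo, of "[]" "[x]"] by auto
    then have "lt (fmult [inv_letter x] [x]) (fmult [inv_letter x] [])"
      using lt_left[OF bo, of "[x]" "[]" "[inv_letter x]"] by simp
    moreover have "fmult [inv_letter x] [x] = []"
      unfolding fmult_def using red_cancel'[of x "[]"] by simp
    moreover have "fmult [inv_letter x] [] = [inv_letter x]"
      by (simp add: fmult_Nil_right)
    ultimately have pos: "lt [] [inv_letter x]" by simp
    have "W = x # tl W" using Wx by simp
    then have "word_inv W = word_inv (x # tl W)" by simp
    then have "word_inv W = word_inv (tl W) @ [inv_letter x] @ []" by simp
    then have "subword [inv_letter x] (word_inv W)" unfolding subword_def by blast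
    then have "\<exists>V\<in>R_set W. subword [inv_letter x] V" using R_set_inv[OF R_set_self] by blast
    then show ?thesis using that[of "[inv_letter x]"] pos ascent_single[of lt "inv_letter x"] by simp
  qed
  show ?thesis
  proof
    assume "M = []"
    then have "A0 = [] \<or> lt A0 []" using mx A0 unfolding is_max_ascent_def by blast
    then show False
    proof
      assume "A0 = []" then show False using A0(3) lt_irrefl[OF bo] by simp
    next
      assume "lt A0 []" then show False using A0(3,4) lt_asym[OF bo, of "[]" A0] by simp
    qed
  qed
qed

theorem proposition2p6:
  fixes lt :: "'a word \<Rightarrow> 'a word \<Rightarrow> bool" and W :: "'a word"
  assumes "bi_order lt"
    and "cyclically_reduced W"
    and "\<not> periodic W"
  shows "(\<exists>M. is_max_ascent lt W M) \<and>
         (\<forall>M. is_max_ascent lt W M \<longrightarrow> uniquely_positioned M W)"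
proof
  show "\<exists>M. is_max_ascent lt W M" by (rule max_exists[OF assms(1,2)])
next
  note bo = assms(1) and cr = assms(2) and np = assms(3)
  have Wne: "W \<noteq> []"
  proof
    assume "W = []"
    then have "periodic W" unfolding periodic_def
      by (intro exI[of _ "[]"] exI[of _ "2::nat"]) (simp add: cyclically_reduced_def)
    with np show False by simp
  qed
  show "\<forall>M. is_max_ascent lt W M \<longrightarrow> uniquely_positioned M W"
  proof (intro allI impI)
    fix M assume mx: "is_max_ascent lt W M"
    have Mne: "M \<noteq> []" by (rule M_nonempty[OF bo cr Wne mx])
    from mx obtain V0 where V0: "V0 \<in> R_set W" "subword M V0" unfolding is_max_ascent_def by blast
    have rM: "reduced M" using subword_reduced[OF cr V0] .
    from V0(2) obtain S U where SU: "V0 = S @ M @ U" unfolding subword_def by blast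
    have V1: "M @ U @ S \<in> R_set W" using R_set_shift[OF V0(1), of S "M @ U"] SU by simp
    have ex: "\<exists>V. V \<in> R_set W \<and> prefix M V" using V1 by (intro exI[of _ "M @ U @ S"]) (simp add: prefix_def)
    have un: "\<And>V V'. V \<in> R_set W \<and> prefix M V \<Longrightarrow> V' \<in> R_set W \<and> prefix M V' \<Longrightarrow> V = V'"
      using unique_prefix[OF bo cr np mx Mne] by blast
    show "uniquely_positioned M W"
      unfolding uniquely_positioned_def using Mne rM ex un by blast
  qed
qed


end
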